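(* Let $\mathbf{v}_1,\mathbf{r}_u,\mathbf{r}_v\in\mathbb{R}^3$ with $\mathbf{r}_u,\mathbf{r}_v$ linearly independent, and let $\mathbf{r}_q(u,v)=\mathbf{r}_u u+\mathbf{r}_v v+\mathbf{v}_1$. For integers $n\ge 0$, $|m|\le n$, $b\ge 0$, $c\ge 0$ define $$Q_{n,b}^{m,c}(u,v)=R_n^m(\mathbf{r}_q(u,v))\,u^b v^c,\qquad \psi_{n,b}^{m,c}=\int_0^1\!\!\int_0^{1-u}Q_{n,b}^{m,c}(u,v)\,dv\,du,\qquad j_{n,b}^{m,c}=\int_0^1 Q_{n,b}^{m,c}(u,1-u)\,du,$$ with the convention that $Q_{n,b}^{m,c}$, $\psi_{n,b}^{m,c}$, $j_{n,b}^{m,c}$ are zero whenever $n<0$ or $|m|>n$. Write $\mathbf{v}_1=(v_{1,x},v_{1,y},v_{1,z})^T$ and set $\xi_0=(v_{1,x}+i v_{1,y})/2$, $\eta_0=(v_{1,x}-i v_{1,y})/2$, $z_0=v_{1,z}$. Then for all integers $n\ge 0$, $|m|\le n$, $b\ge0$, $c\ge 0$, $$\psi_{n,b}^{m,c}=\frac{i\,\xi_0\,\psi_{n-1,b}^{m-1,c}+i\,\eta_0\,\psi_{n-1,b}^{m+1,c}-z_0\,\psi_{n-1,b}^{m,c}+j_{n,b}^{m,c}}{n+b+c+2}.$$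
   Context: The regular solid harmonics are defined for $n=0,1,2,\dots$, $m=-n,\dots,n$ by $$R_n^m(\mathbf{r})=\frac{(-1)^n i^{|m|}}{(n+|m|)!}\,r^n P_n^{|m|}(\cos\theta)\,e^{im\varphi},$$ where $(r,\theta,\varphi)$ are the spherical coordinates of $\mathbf{r}=(x,y,z)^T=r(\sin\theta\cos\varphi,\sin\theta\sin\varphi,\cos\theta)^T$, and for $m\ge 0$, $P_n^m(\mu)=\frac{(-1)^m(1-\mu^2)^{m/2}}{2^n n!}\frac{d^{m+n}}{d\mu^{m+n}}(\mu^2-1)^n$ are the associated Legendre functions. $R_n^m$ is taken to be $0$ when $|m|>n$ or $n<0$. *)

theory Defs
  imports "HOL-Analysis.Analysis"
begin

text \<open>Associated Legendre function P_n^m for m \<ge> 0, via the Rodrigues-type formula;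
  the factor (1 - mu^2)^(m/2) is written as sqrt(1 - mu^2)^m (they agree on [-1,1]).\<close>
definition assoc_legendre :: "nat \<Rightarrow> nat \<Rightarrow> real \<Rightarrow> real" where
  "assoc_legendre n m \<mu> =
     (-1) ^ m * sqrt (1 - \<mu>\<^sup>2) ^ m / (2 ^ n * fact n)
     * (deriv ^^ (m + n)) (\<lambda>t. (t\<^sup>2 - 1) ^ n) \<mu>"

definition sph_theta :: "real ^ 3 \<Rightarrow> real" where
  "sph_theta r = (if norm r = 0 then 0 else arccos (r $ 3 / norm r))"

definition sph_phi :: "real ^ 3 \<Rightarrow> real" where
  "sph_phi r = Arg (Complex (r $ 1) (r $ 2))"

definition solid_R :: "int \<Rightarrow> int \<Rightarrow> real ^ 3 \<Rightarrow> complex" where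
  "solid_R n m r =
     (if n < 0 \<or> \<bar>m\<bar> > n then 0
      else ((-1) ^ nat n * \<i> ^ nat \<bar>m\<bar> / fact (nat (n + \<bar>m\<bar>)))
           * complex_of_real (norm r ^ nat n * assoc_legendre (nat n) (nat \<bar>m\<bar>) (cos (sph_theta r)))
           * exp (\<i> * of_int m * complex_of_real (sph_phi r)))"

definition r_q :: "real ^ 3 \<Rightarrow> real ^ 3 \<Rightarrow> real ^ 3 \<Rightarrow> real \<Rightarrow> real \<Rightarrow> real ^ 3" where
  "r_q v1 ru rv u v = u *\<^sub>R ru + v *\<^sub>R rv + v1"

definition Q_fun :: "real ^ 3 \<Rightarrow> real ^ 3 \<Rightarrow> real ^ 3 \<Rightarrow> int \<Rightarrow> int \<Rightarrow> nat \<Rightarrow> nat \<Rightarrow> real \<Rightarrow> real \<Rightarrow> complex" where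
  "Q_fun v1 ru rv n m b c u v = solid_R n m (r_q v1 ru rv u v) * complex_of_real (u ^ b * v ^ c)"

definition psi :: "real ^ 3 \<Rightarrow> real ^ 3 \<Rightarrow> real ^ 3 \<Rightarrow> int \<Rightarrow> int \<Rightarrow> nat \<Rightarrow> nat \<Rightarrow> complex" where
  "psi v1 ru rv n m b c =
     integral {0..1} (\<lambda>u. integral {0..1 - u} (\<lambda>v. Q_fun v1 ru rv n m b c u v))"

definition j_fun :: "real ^ 3 \<Rightarrow> real ^ 3 \<Rightarrow> real ^ 3 \<Rightarrow> int \<Rightarrow> int \<Rightarrow> nat \<Rightarrow> nat \<Rightarrow> complex" where
  "j_fun v1 ru rv n m b c = integral {0..1} (\<lambda>u. Q_fun v1 ru rv n m b c u (1 - u))"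

end

theory Submission
  imports Defs
begin

definition kap :: "nat \<Rightarrow> nat \<Rightarrow> nat \<Rightarrow> complex" where
  "kap a b s = \<i> ^ (a + b) * (-1) ^ s / (fact a * fact b * fact s)"

definition Trip :: "int \<Rightarrow> int \<Rightarrow> (nat \<times> nat \<times> nat) set" where
  "Trip n m = {(a, b, s). int a + int b + int s = n \<and> int a - int b = m}"

definition Pc :: "int \<Rightarrow> int \<Rightarrow> complex \<Rightarrow> complex \<Rightarrow> complex \<Rightarrow> complex" where
  "Pc n m X Y Z = (\<Sum>(a, b, s)\<in>Trip n m. kap a b s * X ^ a * Y ^ b * Z ^ s)"

lemma finite_Trip [simp]: "finite (Trip n m)"
proof -
  have "Trip n m \<subseteq> {..nat n} \<times> {..nat n} \<times> {..nat n}"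
    by (auto simp: Trip_def)
  then show ?thesis by (rule finite_subset) auto
qed

lemma kapA: "kap (Suc a) b s * of_nat (Suc a) = \<i> * kap a b s"
proof -
  have nz: "(of_nat (Suc a) :: complex) \<noteq> 0" by (simp del: of_nat_Suc)
  have "kap (Suc a) b s = \<i> * kap a b s / of_nat (Suc a)"
    unfolding kap_def fact_Suc by (simp del: of_nat_Suc add: field_simps)
  then show ?thesis using nz by simp
qed
lemma kapB: "kap a (Suc b) s * of_nat (Suc b) = \<i> * kap a b s"
proof -
  have nz: "(of_nat (Suc b) :: complex) \<noteq> 0" by (simp del: of_nat_Suc)
  have "kap a (Suc b) s = \<i> * kap a b s / of_nat (Suc b)"
    unfolding kap_def fact_Suc by (simp del: of_nat_Suc add: field_simps)
  then show ?thesis using nz by simp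
qed
lemma kapS: "kap a b (Suc s) * of_nat (Suc s) = - kap a b s"
proof -
  have nz: "(of_nat (Suc s) :: complex) \<noteq> 0" by (simp del: of_nat_Suc)
  have "kap a b (Suc s) = - kap a b s / of_nat (Suc s)"
    unfolding kap_def fact_Suc by (simp del: of_nat_Suc add: field_simps)
  then show ?thesis using nz by simp
qed

lemma E1: "(\<Sum>(a, b, s)\<in>Trip n m. kap a b s * of_nat a * X ^ (a - 1) * Y ^ b * Z ^ s)
   = \<i> * Pc (n - 1) (m - 1) X Y Z"
proof -
  let ?F = "\<lambda>(a, b, s). kap a b s * of_nat a * X ^ (a - 1) * Y ^ b * Z ^ s"
  let ?h = "\<lambda>(a::nat, b::nat, s::nat). (Suc a, b, s)"
  have sub: "?h ` Trip (n - 1) (m - 1) \<subseteq> Trip n m" by (auto simp: Trip_def)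
  have "sum ?F (Trip n m) = sum ?F (?h ` Trip (n - 1) (m - 1))"
  proof (rule sum.mono_neutral_right[OF finite_Trip sub], rule ballI)
    fix t assume t: "t \<in> Trip n m - ?h ` Trip (n - 1) (m - 1)"
    obtain a b s where ts: "t = (a, b, s)" by (cases t) auto
    have "a = 0" using t unfolding ts
      by (cases a) (auto simp: Trip_def image_iff)
    then show "?F t = 0" by (simp add: ts)
  qed
  also have "\<dots> = sum (?F \<circ> ?h) (Trip (n - 1) (m - 1))"
    by (rule sum.reindex) (auto simp: inj_on_def)
  also have "\<dots> = (\<Sum>(a, b, s)\<in>Trip (n - 1) (m - 1). \<i> * (kap a b s * X ^ a * Y ^ b * Z ^ s))"
  proof (rule sum.cong[OF refl], clarify)
    fix a b s
    have "(?F \<circ> ?h) (a, b, s) = (kap (Suc a) b s * of_nat (Suc a)) * (X ^ a * Y ^ b * Z ^ s)"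
      by (simp only: comp_def case_prod_conv diff_Suc_1 mult.assoc)
    also have "\<dots> = \<i> * (kap a b s * X ^ a * Y ^ b * Z ^ s)"
      by (subst kapA) (simp only: mult.assoc mult_minus_left)
    finally show "(?F \<circ> ?h) (a, b, s) = \<i> * (kap a b s * X ^ a * Y ^ b * Z ^ s)" .
  qed
  also have "\<dots> = \<i> * Pc (n - 1) (m - 1) X Y Z"
    by (simp add: Pc_def sum_distrib_left case_prod_unfold)
  finally show ?thesis .
qed

lemma E2: "(\<Sum>(a, b, s)\<in>Trip n m. kap a b s * of_nat b * X ^ a * Y ^ (b - 1) * Z ^ s)
   = \<i> * Pc (n - 1) (m + 1) X Y Z"
proof -
  let ?F = "\<lambda>(a, b, s). kap a b s * of_nat b * X ^ a * Y ^ (b - 1) * Z ^ s"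
  let ?h = "\<lambda>(a::nat, b::nat, s::nat). (a, Suc b, s)"
  have sub: "?h ` Trip (n - 1) (m + 1) \<subseteq> Trip n m" by (auto simp: Trip_def)
  have "sum ?F (Trip n m) = sum ?F (?h ` Trip (n - 1) (m + 1))"
  proof (rule sum.mono_neutral_right[OF finite_Trip sub], rule ballI)
    fix t assume t: "t \<in> Trip n m - ?h ` Trip (n - 1) (m + 1)"
    obtain a b s where ts: "t = (a, b, s)" by (cases t) auto
    have "b = 0" using t unfolding ts
      by (cases b) (auto simp: Trip_def image_iff)
    then show "?F t = 0" by (simp add: ts)
  qed
  also have "\<dots> = sum (?F \<circ> ?h) (Trip (n - 1) (m + 1))"
    by (rule sum.reindex) (auto simp: inj_on_def)
  also have "\<dots> = (\<Sum>(a, b, s)\<in>Trip (n - 1) (m + 1). \<i> * (kap a b s * X ^ a * Y ^ b * Z ^ s))"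
  proof (rule sum.cong[OF refl], clarify)
    fix a b s
    have "(?F \<circ> ?h) (a, b, s) = (kap a (Suc b) s * of_nat (Suc b)) * (X ^ a * Y ^ b * Z ^ s)"
      by (simp only: comp_def case_prod_conv diff_Suc_1 mult.assoc)
    also have "\<dots> = \<i> * (kap a b s * X ^ a * Y ^ b * Z ^ s)"
      by (subst kapB) (simp only: mult.assoc mult_minus_left)
    finally show "(?F \<circ> ?h) (a, b, s) = \<i> * (kap a b s * X ^ a * Y ^ b * Z ^ s)" .
  qed
  also have "\<dots> = \<i> * Pc (n - 1) (m + 1) X Y Z"
    by (simp add: Pc_def sum_distrib_left case_prod_unfold)
  finally show ?thesis .
qed

lemma E3: "(\<Sum>(a, b, s)\<in>Trip n m. kap a b s * of_nat s * X ^ a * Y ^ b * Z ^ (s - 1))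
   = - Pc (n - 1) m X Y Z"
proof -
  let ?F = "\<lambda>(a, b, s). kap a b s * of_nat s * X ^ a * Y ^ b * Z ^ (s - 1)"
  let ?h = "\<lambda>(a::nat, b::nat, s::nat). (a, b, Suc s)"
  have sub: "?h ` Trip (n - 1) m \<subseteq> Trip n m" by (auto simp: Trip_def)
  have "sum ?F (Trip n m) = sum ?F (?h ` Trip (n - 1) m)"
  proof (rule sum.mono_neutral_right[OF finite_Trip sub], rule ballI)
    fix t assume t: "t \<in> Trip n m - ?h ` Trip (n - 1) m"
    obtain a b s where ts: "t = (a, b, s)" by (cases t) auto
    have "s = 0" using t unfolding ts
      by (cases s) (auto simp: Trip_def image_iff)
    then show "?F t = 0" by (simp add: ts)
  qed
  also have "\<dots> = sum (?F \<circ> ?h) (Trip (n - 1) m)"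
    by (rule sum.reindex) (auto simp: inj_on_def)
  also have "\<dots> = (\<Sum>(a, b, s)\<in>Trip (n - 1) m. - (kap a b s * X ^ a * Y ^ b * Z ^ s))"
  proof (rule sum.cong[OF refl], clarify)
    fix a b s
    have "(?F \<circ> ?h) (a, b, s) = (kap a b (Suc s) * of_nat (Suc s)) * (X ^ a * Y ^ b * Z ^ s)"
      by (simp only: comp_def case_prod_conv diff_Suc_1 mult.assoc)
    also have "\<dots> = -  (kap a b s * X ^ a * Y ^ b * Z ^ s)"
      by (subst kapS) (simp only: mult.assoc mult_minus_left)
    finally show "(?F \<circ> ?h) (a, b, s) = -  (kap a b s * X ^ a * Y ^ b * Z ^ s)" .
  qed
  also have "\<dots> = - Pc (n - 1) m X Y Z"
    by (simp add: Pc_def sum_negf case_prod_unfold)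
  finally show ?thesis .
qed

definition DPc :: "int \<Rightarrow> int \<Rightarrow> complex \<Rightarrow> complex \<Rightarrow> complex \<Rightarrow> complex \<Rightarrow> complex \<Rightarrow> complex \<Rightarrow> complex" where
  "DPc n m X Y Z A B C = A * (\<i> * Pc (n - 1) (m - 1) X Y Z) + B * (\<i> * Pc (n - 1) (m + 1) X Y Z)
     + C * (- Pc (n - 1) m X Y Z)"

lemma mono_deriv:
  "((\<lambda>w. (X + w * A) ^ a * (Y + w * B) ^ b * (Z + w * C) ^ s) has_field_derivative
    (A * (of_nat a * (X + w * A) ^ (a - 1) * (Y + w * B) ^ b * (Z + w * C) ^ s)
   + B * (of_nat b * (X + w * A) ^ a * (Y + w * B) ^ (b - 1) * (Z + w * C) ^ s)
   + C * (of_nat s * (X + w * A) ^ a * (Y + w * B) ^ b * (Z + w * C) ^ (s - 1)))) (at w)"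
  apply (rule derivative_eq_intros refl)+
  apply (simp add: algebra_simps)
  done

lemma Pc_alt: "Pc n m X Y Z = (\<Sum>t\<in>Trip n m. kap (fst t) (fst (snd t)) (snd (snd t)) *
   (X ^ fst t * Y ^ fst (snd t) * Z ^ snd (snd t)))"
  unfolding Pc_def case_prod_unfold by (simp only: mult.assoc)

lemma DPc_sum: "DPc n m X Y Z A B C = (\<Sum>t\<in>Trip n m. kap (fst t) (fst (snd t)) (snd (snd t)) *
   (A * (of_nat (fst t) * X ^ (fst t - 1) * Y ^ fst (snd t) * Z ^ snd (snd t))
   + B * (of_nat (fst (snd t)) * X ^ fst t * Y ^ (fst (snd t) - 1) * Z ^ snd (snd t))
   + C * (of_nat (snd (snd t)) * X ^ fst t * Y ^ fst (snd t) * Z ^ (snd (snd t) - 1))))"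
  unfolding DPc_def E1[symmetric] E2[symmetric] E3[symmetric] case_prod_unfold
  unfolding sum_distrib_left sum.distrib[symmetric] sum_negf[symmetric]
  apply (rule sum.cong[OF refl])
  apply (simp only: distrib_left mult_ac)
  done

lemma Pc_deriv:
  "((\<lambda>w. Pc n m (X + w * A) (Y + w * B) (Z + w * C)) has_field_derivative
     DPc n m (X + w * A) (Y + w * B) (Z + w * C) A B C) (at w)"
  unfolding Pc_alt DPc_sum
  apply (rule DERIV_sum)
  apply (rule DERIV_cmult)
  apply (rule mono_deriv)
  done

lemma pow_pred_mult: "of_nat a * x ^ (a - 1) * x = of_nat a * (x :: complex) ^ a"
  by (cases a) (simp_all del: of_nat_Suc)

lemma Pc_euler: "DPc n m X Y Z X Y Z = of_int n * Pc n m X Y Z"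
proof -
  have "DPc n m X Y Z X Y Z = (\<Sum>t\<in>Trip n m. of_int n * (kap (fst t) (fst (snd t)) (snd (snd t)) *
   (X ^ fst t * Y ^ fst (snd t) * Z ^ snd (snd t))))"
    unfolding DPc_sum
  proof (rule sum.cong[OF refl])
    fix t assume t: "t \<in> Trip n m"
    obtain a b s where ts: "t = (a, b, s)" by (cases t) auto
    have nn: "n = int a + int b + int s"
      using t unfolding ts Trip_def by auto
    have ns: "of_int n = (of_nat a + of_nat b + of_nat s :: complex)"
      unfolding nn by simp
    have 1: "X * (of_nat a * X ^ (a - 1) * Y ^ b * Z ^ s) = of_nat a * X ^ a * Y ^ b * Z ^ s"
      by (cases a) (simp_all add: mult_ac)
    have 2: "Y * (of_nat b * X ^ a * Y ^ (b - 1) * Z ^ s) = of_nat b * X ^ a * Y ^ b * Z ^ s"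
      by (cases b) (simp_all add: mult_ac)
    have 3: "Z * (of_nat s * X ^ a * Y ^ b * Z ^ (s - 1)) = of_nat s * X ^ a * Y ^ b * Z ^ s"
      by (cases s) (simp_all add: mult_ac)
    show "kap (fst t) (fst (snd t)) (snd (snd t)) *
     (X * (of_nat (fst t) * X ^ (fst t - 1) * Y ^ fst (snd t) * Z ^ snd (snd t))
    + Y * (of_nat (fst (snd t)) * X ^ fst t * Y ^ (fst (snd t) - 1) * Z ^ snd (snd t))
    + Z * (of_nat (snd (snd t)) * X ^ fst t * Y ^ fst (snd t) * Z ^ (snd (snd t) - 1))) =
     of_int n * (kap (fst t) (fst (snd t)) (snd (snd t)) * (X ^ fst t * Y ^ fst (snd t) * Z ^ snd (snd t)))"
      unfolding ts fst_conv snd_conv distrib_left 1 2 3 ns by (simp add: algebra_simps)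
  qed
  also have "\<dots> = of_int n * Pc n m X Y Z"
    unfolding Pc_alt by (simp add: sum_distrib_left)
  finally show ?thesis .
qed


definition invf :: "int \<Rightarrow> real" where
  "invf k = (if k < 0 then 0 else 1 / fact (nat k))"

definition pw :: "real \<Rightarrow> int \<Rightarrow> real" where
  "pw x k = (if k < 0 then 0 else x ^ nat k)"

lemma invf_pred: "invf (k - 1) = of_int k * invf k"
proof (cases "k \<le> 0")
  case True then show ?thesis by (cases "k = 0") (auto simp: invf_def)
next
  case False
  then obtain j where j: "nat k = Suc j" "nat (k - 1) = j"
    by (metis Suc_nat_eq_nat_zadd1 add.commute diff_add_cancel int_ops(6) not_less nat_int zless_imp_add1_zle zless_nat_conj)
  have "of_int k = (of_nat (Suc j) :: real)" using False j(1) by (metis int_nat_eq of_int_of_nat_eq not_le order_less_le)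
  then show ?thesis using False j by (simp add: invf_def field_simps del: of_nat_Suc)
qed

lemma invf_nz: "invf k \<noteq> 0 \<Longrightarrow> k \<ge> 0"
  by (auto simp: invf_def split: if_splits)

lemma pw_shift: "k \<ge> 0 \<Longrightarrow> x * pw x k = pw x (k + 1)"
  by (auto simp: pw_def nat_add_distrib)

lemma pw_deriv: "((\<lambda>x. pw x k) has_real_derivative (of_int k * pw x (k - 1))) (at x)"
proof (cases "k \<le> 0")
  case True
  then have "(\<lambda>x. pw x k) = (\<lambda>x. if k < 0 then 0 else 1)" by (auto simp: pw_def)
  moreover have "of_int k * pw x (k - 1) = 0" using True by (cases "k = 0") (auto simp: pw_def)
  ultimately show ?thesis by (auto intro: derivative_eq_intros)
next
  case False
  then have e: "(\<lambda>x. pw x k) = (\<lambda>x. x ^ nat k)" by (auto simp: pw_def)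
  have "of_int k * pw x (k - 1) = real (nat k) * x ^ (nat k - 1)"
    using False by (auto simp: pw_def nat_diff_distrib)
  then show ?thesis unfolding e by (auto intro!: derivative_eq_intros)
qed

definition CC :: "nat \<Rightarrow> nat \<Rightarrow> nat \<Rightarrow> real" where
  "CC N K q = fact K * fact N * 2 ^ (2 * N - K) * (- 1 / 4) ^ q
     * invf (int q + int K - int N) * invf (int q) * invf (2 * int N - int K - 2 * int q)"

definition Lfun :: "nat \<Rightarrow> nat \<Rightarrow> real \<Rightarrow> real" where
  "Lfun N K \<mu> = (\<Sum>q\<le>N. CC N K q * (1 - \<mu>\<^sup>2) ^ q * pw \<mu> (2 * int N - int K - 2 * int q))"

lemma CC_coeff:
  assumes "K + 1 \<le> 2 * N"
  shows "CC N (Suc K) q = - 2 * of_nat (Suc q) * CC N K (Suc q)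
           + of_int (2 * int N - int K - 2 * int q) * CC N K q"
proof -
  define A where "A = int q + int K - int N"
  define E where "E = 2 * int N - int K - 2 * int q"
  define X1 where "X1 = invf (A + 1)"
  define X2 where "X2 = invf (int q + 1)"
  define X3 where "X3 = invf E"
  define f where "f = fact K * fact N * (2::real) ^ (2 * N - Suc K)"
  have iA: "invf A = of_int (A + 1) * X1" unfolding X1_def using invf_pred[of "A + 1"] by simp
  have iq: "invf (int q) = of_int (int q + 1) * X2" unfolding X2_def using invf_pred[of "int q + 1"] by simp
  have iE1: "invf (E - 1) = of_int E * X3" unfolding X3_def using invf_pred[of E] by simp
  have iE2: "invf (E - 2) = of_int (E - 1) * of_int E * X3"
    using invf_pred[of "E - 1"] iE1 by (simp add: algebra_simps)
  have p: "(2::real) ^ (2 * N - K) = 2 * 2 ^ (2 * N - Suc K)"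
    using assms by (metis Suc_diff_le Suc_eq_plus1 add_leD1 diff_Suc_Suc le_SucI nat_le_linear power_Suc Suc_leI  le_add_diff_inverse not_less_eq_eq)
  have c1: "CC N K q = 2 * f * (- 1 / 4) ^ q * (of_int (A + 1) * X1) * (of_int (int q + 1) * X2) * X3"
    unfolding CC_def A_def[symmetric] E_def[symmetric] iA iq f_def p X3_def by simp
  have c2: "CC N K (Suc q) = 2 * f * (- 1 / 4) ^ q * (- 1 / 4) * X1 * X2 * (of_int (E - 1) * of_int E * X3)"
  proof -
    have "int (Suc q) + int K - int N = A + 1" by (simp add: A_def)
    moreover have "2 * int N - int K - 2 * int (Suc q) = E - 2" by (simp add: E_def)
    ultimately show ?thesis unfolding CC_def iE2[symmetric] f_def p X1_def X2_def
      by (simp add: algebra_simps)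
  qed
  have c3: "CC N (Suc K) q = fact (Suc K) * fact N * 2 ^ (2 * N - Suc K) * (- 1 / 4) ^ q * X1 * (of_int (int q + 1) * X2) * (of_int E * X3)"
  proof -
    have "int q + int (Suc K) - int N = A + 1" by (simp add: A_def)
    moreover have "2 * int N - int (Suc K) - 2 * int q = E - 1" by (simp add: E_def)
    ultimately show ?thesis unfolding CC_def iE1[symmetric] iq[symmetric] X1_def
      by (simp add: algebra_simps)
  qed
  have rel: "E + 2 * A + 1 = int K + 1" by (simp add: A_def E_def)
  have rel': "(of_int E :: real) = of_int (int K) - 2 * of_int A" using rel by linarith
  define G where "G = f * (- 1 / 4) ^ q * X1 * X2 * X3"
  have L: "CC N (Suc K) q = G * (of_int (int K) + 1) * (of_int (int q) + 1) * of_int E"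
    unfolding c3 G_def f_def by (simp add: algebra_simps)
  have R: "- 2 * of_nat (Suc q) * CC N K (Suc q) + of_int E * CC N K q
      = G * (of_int (int q) + 1) * of_int E * ((of_int E - 1) + 2 * (of_int A + 1))"
    unfolding c1 c2 G_def by (simp add: field_simps)
  have "(of_int E - 1) + 2 * (of_int A + 1) = (of_int (int K) + 1 :: real)" using rel' by simp
  then show ?thesis unfolding E_def[symmetric] using L R by simp
qed

lemma CC_zero_high: "CC N K (Suc N) = 0"
  unfolding CC_def invf_def by simp

lemma CC_nz_exp: "CC N K q \<noteq> 0 \<Longrightarrow> 2 * int N - int K - 2 * int q \<ge> 0"
  unfolding CC_def using invf_nz by fastforce

lemma CC_nz_low: "CC N K q \<noteq> 0 \<Longrightarrow> int q + int K - int N \<ge> 0"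
  unfolding CC_def using invf_nz by fastforce

lemma Lfun_deriv:
  assumes "K + 1 \<le> 2 * N"
  shows "(Lfun N K has_real_derivative Lfun N (Suc K) \<mu>) (at \<mu>)"
proof -
  define e where "e q = 2 * int N - int K - 2 * int q" for q
  define f where "f q = CC N K q * (of_nat q * (1 - \<mu>\<^sup>2) ^ (q - 1) * (- 2 * \<mu>) * pw \<mu> (e q))" for q
  define g where "g q = CC N K q * ((1 - \<mu>\<^sup>2) ^ q * (of_int (e q) * pw \<mu> (e q - 1)))" for q
  have d: "(Lfun N K has_real_derivative (\<Sum>q\<le>N. f q + g q)) (at \<mu>)"
  proof -
    have "Lfun N K = (\<lambda>\<mu>. \<Sum>q\<le>N. CC N K q * ((1 - \<mu>\<^sup>2) ^ q * pw \<mu> (e q)))"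
      by (auto simp: Lfun_def e_def mult.assoc)
    moreover have "((\<lambda>\<mu>. CC N K q * ((1 - \<mu>\<^sup>2) ^ q * pw \<mu> (e q))) has_real_derivative f q + g q) (at \<mu>)" for q
    proof -
      have h1: "((\<lambda>\<mu>. (1 - \<mu>\<^sup>2) ^ q) has_real_derivative of_nat q * (1 - \<mu>\<^sup>2) ^ (q - 1) * (- 2 * \<mu>)) (at \<mu>)"
        by (rule derivative_eq_intros refl | simp)+
      show ?thesis
        by (rule DERIV_cong[OF DERIV_cmult[OF DERIV_mult'[OF h1 pw_deriv]]]) (simp add: f_def g_def algebra_simps)
    qed
    ultimately show ?thesis by (auto intro!: DERIV_sum)
  qed
  have S1: "(\<Sum>q\<le>N. f q) = (\<Sum>q\<le>N. - 2 * of_nat (Suc q) * CC N K (Suc q) * (1 - \<mu>\<^sup>2) ^ q * pw \<mu> (e q - 1))"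
  proof -
    have "(\<Sum>q\<le>N. f q) = (\<Sum>q\<le>Suc N. f q)" by (simp add: f_def CC_zero_high)
    also have "\<dots> = f 0 + (\<Sum>q\<le>N. f (Suc q))" by (rule sum.atMost_Suc_shift)
    also have "\<dots> = (\<Sum>q\<le>N. f (Suc q))" by (simp add: f_def)
    also have "\<dots> = (\<Sum>q\<le>N. - 2 * of_nat (Suc q) * CC N K (Suc q) * (1 - \<mu>\<^sup>2) ^ q * pw \<mu> (e q - 1))"
    proof (rule sum.cong[OF refl])
      fix q
      show "f (Suc q) = - 2 * of_nat (Suc q) * CC N K (Suc q) * (1 - \<mu>\<^sup>2) ^ q * pw \<mu> (e q - 1)"
      proof (cases "CC N K (Suc q) = 0")
        case True then show ?thesis by (simp add: f_def)
      next
        case False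
        then have ge: "e (Suc q) \<ge> 0" using CC_nz_exp[OF False] by (simp add: e_def)
        have h: "\<mu> * pw \<mu> (e (Suc q)) = pw \<mu> (e q - 1)"
          using pw_shift[OF ge] by (simp add: e_def algebra_simps)
        have eq2: "f (Suc q) = - 2 * of_nat (Suc q) * CC N K (Suc q) * (1 - \<mu>\<^sup>2) ^ q * (\<mu> * pw \<mu> (e (Suc q)))"
          unfolding f_def diff_Suc_1 by (simp only: mult_ac mult_minus_left mult_minus_right)
        show ?thesis unfolding eq2 h ..
      qed
    qed
    finally show ?thesis .
  qed
  have "(\<Sum>q\<le>N. f q + g q) = Lfun N (Suc K) \<mu>"
  proof -
    have "(\<Sum>q\<le>N. f q + g q) = (\<Sum>q\<le>N. (- 2 * of_nat (Suc q) * CC N K (Suc q) + of_int (e q) * CC N K q) * (1 - \<mu>\<^sup>2) ^ q * pw \<mu> (e q - 1))"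
      unfolding sum.distrib S1 
      unfolding sum.distrib[symmetric]
      by (rule sum.cong[OF refl]) (simp add: g_def algebra_simps)
    also have "\<dots> = Lfun N (Suc K) \<mu>"
      unfolding Lfun_def CC_coeff[OF assms]
      by (rule sum.cong[OF refl]) (simp add: e_def algebra_simps)
    finally show ?thesis .
  qed
  with d show ?thesis by simp
qed

lemma Lfun_base: "Lfun N 0 \<mu> = (\<mu>\<^sup>2 - 1) ^ N"
proof -
  have "Lfun N 0 \<mu> = (\<Sum>q<N. CC N 0 q * (1 - \<mu>\<^sup>2) ^ q * pw \<mu> (2 * int N - 2 * int q)) + CC N 0 N * (1 - \<mu>\<^sup>2) ^ N * pw \<mu> 0"
    unfolding Lfun_def lessThan_Suc_atMost[symmetric] by simp
  also have "(\<Sum>q<N. CC N 0 q * (1 - \<mu>\<^sup>2) ^ q * pw \<mu> (2 * int N - 2 * int q)) = 0"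
    by (rule sum.neutral) (auto simp: CC_def invf_def)
  also have "CC N 0 N = (-1) ^ N"
  proof -
    have "(2::real) ^ (2 * N) * (- 1 / 4) ^ N = (-1) ^ N"
      by (simp add: power_mult power_mult_distrib[symmetric])
    then show ?thesis by (simp add: CC_def invf_def)
  qed
  finally show ?thesis by (simp add: pw_def power_mult_distrib[symmetric])
qed

lemma RL: "K \<le> 2 * N \<Longrightarrow> (deriv ^^ K) (\<lambda>t. (t\<^sup>2 - 1) ^ N) = Lfun N K"
proof (induction K)
  case 0
  then show ?case by (auto simp: Lfun_base)
next
  case (Suc K)
  then have IH: "(deriv ^^ K) (\<lambda>t. (t\<^sup>2 - 1) ^ N) = Lfun N K" by simp
  show ?case
  proof
    fix \<mu>
    have "(deriv ^^ Suc K) (\<lambda>t. (t\<^sup>2 - 1) ^ N) \<mu> = deriv (Lfun N K) \<mu>" using IH by simp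
    also have "\<dots> = Lfun N (Suc K) \<mu>"
      using Lfun_deriv[of K N \<mu>] Suc.prems by (intro DERIV_imp_deriv) simp
    finally show "(deriv ^^ Suc K) (\<lambda>t. (t\<^sup>2 - 1) ^ N) \<mu> = Lfun N (Suc K) \<mu>" .
  qed
qed


lemma i_pow_even: "\<i> ^ (2 * q) = ((-1) ^ q :: complex)"
  by (simp add: power_mult)

lemma i_sq_pow: "\<i> ^ q * \<i> ^ q = ((-1) ^ q :: complex)"
  by (simp add: power_mult_distrib[symmetric])

lemma invf_nat: "invf (int k) = 1 / fact k"
  by (simp add: invf_def)

lemma Pc_q:
  assumes "0 \<le> n" "\<bar>m\<bar> \<le> n"
  defines "N \<equiv> nat n" and "M \<equiv> nat \<bar>m\<bar>"
  shows "Pc n m X Y Z = (\<Sum>q\<le>N. \<i> ^ M * (-1) ^ q * (-1) ^ (N + M)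
     * of_real (invf (int q + int M) * invf (int q) * invf (int N - int M - 2 * int q))
     * (X * Y) ^ q * (if m \<ge> 0 then X else Y) ^ M * Z ^ (N - M - 2 * q))"
proof -
  define F where "F q = \<i> ^ M * (-1) ^ q * (-1) ^ (N + M)
     * of_real (invf (int q + int M) * invf (int q) * invf (int N - int M - 2 * int q))
     * (X * Y) ^ q * (if m \<ge> 0 then X else Y) ^ M * Z ^ (N - M - 2 * q)" for q
  define Qs where "Qs = {q. q \<le> N \<and> M + 2 * q \<le> N}"
  define h where "h q = (if m \<ge> 0 then (q + M, q, N - M - 2 * q) else (q, q + M, N - M - 2 * q))" for q
  have MN: "M \<le> N" using assms by (simp add: N_def M_def nat_mono)
  have nN: "n = int N" using assms by (simp add: N_def)
  have mM: "m = (if m \<ge> 0 then int M else - int M)" by (simp add: M_def)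
  have img: "h ` Qs = Trip n m"
  proof
    show "h ` Qs \<subseteq> Trip n m"
      using mM by (auto simp: h_def Qs_def Trip_def nN)
    show "Trip n m \<subseteq> h ` Qs"
    proof
      fix t assume t: "t \<in> Trip n m"
      obtain a b s where ts: "t = (a, b, s)" by (cases t) auto
      have e1: "int a + int b + int s = int N" "int a - int b = m" using t ts nN by (auto simp: Trip_def)
      show "t \<in> h ` Qs"
      proof (cases "m \<ge> 0")
        case True
        then have "a = b + M" "N = M + 2 * b + s" using e1 mM by (simp_all split: if_splits; arith)+
        then show ?thesis unfolding ts h_def Qs_def image_iff using True by (intro bexI[of _ b]) auto
      next
        case False
        then have "b = a + M" "N = M + 2 * a + s" using e1 mM by (simp_all split: if_splits; arith)+
        then show ?thesis unfolding ts h_def Qs_def image_iff using False by (intro bexI[of _ a]) auto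
      qed
    qed
  qed
  have inj: "inj_on h Qs" by (auto simp: inj_on_def h_def split: if_splits)
  have "Pc n m X Y Z = (\<Sum>t\<in>h ` Qs. kap (fst t) (fst (snd t)) (snd (snd t)) * X ^ fst t * Y ^ fst (snd t) * Z ^ snd (snd t))"
    unfolding Pc_def img case_prod_unfold ..
  also have "\<dots> = (\<Sum>q\<in>Qs. F q)"
    unfolding sum.reindex[OF inj] o_def
  proof (rule sum.cong[OF refl])
    fix q assume q: "q \<in> Qs"
    define s where "s = N - M - 2 * q"
    have Ns: "N = s + M + 2 * q" using q by (simp add: s_def Qs_def)
    have sgn: "(-1) ^ (N + M) = ((-1) ^ s :: complex)"
      unfolding Ns by (simp add: power_add power_mult)
    have iv: "of_real (invf (int q + int M) * invf (int q) * invf (int N - int M - 2 * int q))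
        = (1 / (fact (q + M) * fact q * fact s) :: complex)"
    proof -
      have a: "invf (int q + int M) = 1 / fact (q + M)" using invf_nat[of "q + M"] by simp
      have b: "invf (int N - int M - 2 * int q) = 1 / fact s" using invf_nat[of s] unfolding Ns by simp
      show ?thesis unfolding a b invf_nat by simp
    qed
    show "kap (fst (h q)) (fst (snd (h q))) (snd (snd (h q))) * X ^ fst (h q) * Y ^ fst (snd (h q)) * Z ^ snd (snd (h q)) = F q"
      unfolding F_def iv sgn s_def[symmetric] h_def kap_def
      by (auto simp: power_add i_pow_even power_mult_distrib field_simps i_sq_pow)
  qed
  also have "\<dots> = (\<Sum>q\<le>N. F q)"
  proof (rule sum.mono_neutral_left)
    show "\<forall>q\<in>{..N} - Qs. F q = 0"
      by (auto simp: F_def Qs_def invf_def)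
  qed (auto simp: Qs_def)
  finally show ?thesis unfolding F_def .
qed


lemma norm3: "norm (x :: real ^ 3) ^ 2 = x$1 ^ 2 + x$2 ^ 2 + x$3 ^ 2"
  by (simp add: norm_vec_def L2_set_def sum_3)

lemma cos_theta: "x \<noteq> 0 \<Longrightarrow> cos (sph_theta x) = x$3 / norm x"
proof -
  assume x: "x \<noteq> 0"
  then have p: "norm x > 0" by simp
  have "\<bar>x$3\<bar> \<le> norm x" by (rule component_le_norm_cart)
  then have b: "\<bar>x$3 / norm x\<bar> \<le> 1" using p by (subst abs_divide) (simp add: divide_le_eq_1)
  have "sph_theta x = arccos (x$3 / norm x)" using x unfolding sph_theta_def by simp
  then show ?thesis using cos_arccos_abs[OF b] by simp
qed

lemma geo_alg:
  fixes \<rho> S z :: real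
  assumes "\<rho> > 0" "\<rho>\<^sup>2 = S + z\<^sup>2" "S \<ge> 0"
  shows "\<rho> ^ (M + 2 * q + s) * (sqrt (1 - (z / \<rho>)\<^sup>2) ^ M * (1 - (z / \<rho>)\<^sup>2) ^ q * (z / \<rho>) ^ s)
     = sqrt S ^ M * S ^ q * z ^ s"
proof -
  have r0: "\<rho>\<^sup>2 \<noteq> 0" using assms(1) by simp
  have e0: "1 - (z / \<rho>)\<^sup>2 = (\<rho>\<^sup>2 - z\<^sup>2) / \<rho>\<^sup>2" using r0 by (simp add: power_divide field_simps)
  have e1: "1 - (z / \<rho>)\<^sup>2 = S / \<rho>\<^sup>2" unfolding e0 using assms(2) by simp
  have e2: "sqrt (1 - (z / \<rho>)\<^sup>2) = sqrt S / \<rho>" unfolding e1 real_sqrt_divide using assms(1)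
    by simp
  have sp: "\<rho> ^ (M + 2 * q + s) = \<rho> ^ M * (\<rho>\<^sup>2) ^ q * \<rho> ^ s" by (simp add: power_add power_mult)
  have a: "\<rho> * (sqrt S / \<rho>) = sqrt S" using assms(1) by simp
  have b: "\<rho>\<^sup>2 * (S / \<rho>\<^sup>2) = S" using r0 by simp
  have c: "\<rho> * (z / \<rho>) = z" using assms(1) by simp
  have "\<rho> ^ (M + 2 * q + s) * (sqrt (1 - (z / \<rho>)\<^sup>2) ^ M * (1 - (z / \<rho>)\<^sup>2) ^ q * (z / \<rho>) ^ s)
     = (\<rho> * (sqrt S / \<rho>)) ^ M * (\<rho>\<^sup>2 * (S / \<rho>\<^sup>2)) ^ q * (\<rho> * (z / \<rho>)) ^ s"
    unfolding e2 unfolding e1 sp by (simp only: power_mult_distrib mult_ac)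
  then show ?thesis unfolding a b c .
qed

lemma CC_spec: "M \<le> N \<Longrightarrow> CC N (M + N) q = fact (M + N) * fact N * 2 ^ (N - M) * (- 1 / 4) ^ q
   * invf (int q + int M) * invf (int q) * invf (int N - int M - 2 * int q)"
proof -
  assume MN: "M \<le> N"
  have e1: "2 * N - (M + N) = N - M" by simp
  have e2: "int q + int (M + N) - int N = int q + int M" by simp
  have e3: "2 * int N - int (M + N) - 2 * int q = int N - int M - 2 * int q" by simp
  show ?thesis unfolding CC_def e1 e2 e3 ..
qed

lemma rad_part:
  fixes x :: "real ^ 3"
  assumes x: "x \<noteq> 0" and MN: "M \<le> N"
  defines "S \<equiv> x$1 ^ 2 + x$2 ^ 2"
  shows "norm x ^ N * (sqrt (1 - (x$3 / norm x)\<^sup>2) ^ M * Lfun N (M + N) (x$3 / norm x))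
     = sqrt S ^ M * (\<Sum>q\<le>N. CC N (M + N) q * S ^ q * pw (x$3) (int N - int M - 2 * int q))"
proof -
  define \<rho> where "\<rho> = norm x"
  define z where "z = x$3"
  have p: "\<rho> > 0" using x by (simp add: \<rho>_def)
  have r2: "\<rho>\<^sup>2 = S + z\<^sup>2" unfolding \<rho>_def S_def z_def norm3 by simp
  have S0: "S \<ge> 0" by (simp add: S_def)
  have ex: "2 * int N - int (M + N) - 2 * int q = int N - int M - 2 * int q" for q by simp
  show ?thesis
    unfolding \<rho>_def[symmetric] z_def[symmetric] Lfun_def sum_distrib_left ex
  proof (rule sum.cong[OF refl])
    fix q
    show "\<rho> ^ N * (sqrt (1 - (z / \<rho>)\<^sup>2) ^ M * (CC N (M + N) q * (1 - (z / \<rho>)\<^sup>2) ^ q * pw (z / \<rho>) (int N - int M - 2 * int q)))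
        = sqrt S ^ M * (CC N (M + N) q * S ^ q * pw z (int N - int M - 2 * int q))"
    proof (cases "CC N (M + N) q = 0")
      case True then show ?thesis by simp
    next
      case False
      have "int N - int M - 2 * int q \<ge> 0" using CC_nz_exp[OF False] by simp
      then obtain s where s1: "int N - int M - 2 * int q = int s"
        using zero_le_imp_eq_int by blast
      then have s2: "N = M + 2 * q + s" by linarith
      note s = s1 s2
      have pw1: "pw (z / \<rho>) (int s) = (z / \<rho>) ^ s" "pw z (int s) = z ^ s" by (simp_all add: pw_def)
      have g: "\<rho> ^ N * (sqrt (1 - (z / \<rho>)\<^sup>2) ^ M * (1 - (z / \<rho>)\<^sup>2) ^ q * (z / \<rho>) ^ s) = sqrt S ^ M * S ^ q * z ^ s"
        unfolding s(2) by (rule geo_alg[OF p r2 S0])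
      show ?thesis unfolding s(1) pw1 using g by (simp add: algebra_simps)
    qed
  qed
qed


lemma ang:
  fixes x1 x2 :: real and m :: int
  shows "complex_of_real (sqrt (x1\<^sup>2 + x2\<^sup>2) ^ nat \<bar>m\<bar>) * exp (\<i> * of_int m * complex_of_real (Arg (Complex x1 x2)))
    = (if m \<ge> 0 then Complex x1 x2 else cnj (Complex x1 x2)) ^ nat \<bar>m\<bar>"
proof -
  define w where "w = Complex x1 x2"
  define M where "M = nat \<bar>m\<bar>"
  have cm: "sqrt (x1\<^sup>2 + x2\<^sup>2) = cmod w" by (simp add: w_def norm_complex_def)
  show ?thesis
    unfolding w_def[symmetric] M_def[symmetric] cm
  proof (cases "w = 0")
    case True
    show "complex_of_real (cmod w ^ M) * exp (\<i> * of_int m * complex_of_real (Arg w)) =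
      (if 0 \<le> m then w else cnj w) ^ M"
    proof (cases "M = 0")
      case True then have "m = 0" by (simp add: M_def)
      then show ?thesis using True by simp
    next
      case False then show ?thesis using \<open>w = 0\<close> by simp
    qed
  next
    case False
    have u: "exp (\<i> * complex_of_real (Arg w)) = w / complex_of_real (cmod w)"
      using cis_Arg[OF False] by (simp add: cis_conv_exp sgn_eq)
    have cw: "complex_of_real (cmod w) \<noteq> 0" using False by simp
    show "complex_of_real (cmod w ^ M) * exp (\<i> * of_int m * complex_of_real (Arg w)) =
      (if 0 \<le> m then w else cnj w) ^ M"
    proof (cases "m \<ge> 0")
      case True
      then have "of_int m = (of_nat M :: complex)" by (simp add: M_def)
      then have "exp (\<i> * of_int m * complex_of_real (Arg w)) = (w / complex_of_real (cmod w)) ^ M"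
        by (simp add: exp_of_nat_mult[symmetric] u[symmetric] mult_ac)
      then show ?thesis using True cw by (simp add: power_divide)
    next
      case False
      then have mm: "of_int m = - (of_nat M :: complex)" by (simp add: M_def)
      have ee: "exp (\<i> * of_int m * complex_of_real (Arg w)) = exp (- (\<i> * complex_of_real (Arg w))) ^ M"
      proof -
        have "\<i> * of_int m * complex_of_real (Arg w) = of_nat M * (- (\<i> * complex_of_real (Arg w)))"
          using mm by simp
        then show ?thesis by (simp only: exp_of_nat_mult)
      qed
      have "exp (- (\<i> * complex_of_real (Arg w))) = cnj w / complex_of_real (cmod w)"
      proof -
        have "exp (- (\<i> * complex_of_real (Arg w))) = cnj (exp (\<i> * complex_of_real (Arg w)))"
          by (simp add: exp_cnj)
        then show ?thesis unfolding u by simp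
      qed
      then have "exp (\<i> * of_int m * complex_of_real (Arg w)) = (cnj w / complex_of_real (cmod w)) ^ M"
        using ee by simp
      then show ?thesis using False cw by (simp add: power_divide)
    qed
  qed
qed

lemma term_alg:
  assumes "M \<le> N"
  shows "(-1) ^ N * \<i> ^ M / fact (M + N) * complex_of_real ((-1) ^ M / (2 ^ N * fact N)) * (2 ^ M * V ^ M)
      * complex_of_real (fact (M + N) * fact N * 2 ^ (N - M) * (- 1 / 4) ^ q * c) * (4 * P) ^ q * Zs
    = \<i> ^ M * (-1) ^ q * (-1) ^ (N + M) * complex_of_real c * P ^ q * V ^ M * Zs"
proof -
  have p2: "(2::complex) ^ N = 2 ^ M * 2 ^ (N - M)" using assms by (simp add: power_add[symmetric])
  have p4: "(- 1 / 4) ^ q * (4::complex) ^ q = (-1) ^ q" by (simp add: power_mult_distrib[symmetric])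
  have s1: "(-1) ^ N * (-1) ^ M = ((-1) ^ (N + M) :: complex)" by (simp add: power_add)
  have f1: "(fact (M + N) :: complex) \<noteq> 0" "(fact N :: complex) \<noteq> 0" by simp_all
  have "(-1) ^ N * \<i> ^ M / fact (M + N) * complex_of_real ((-1) ^ M / (2 ^ N * fact N)) * (2 ^ M * V ^ M)
      * complex_of_real (fact (M + N) * fact N * 2 ^ (N - M) * (- 1 / 4) ^ q * c) * (4 * P) ^ q * Zs
    = ((-1) ^ N * (-1) ^ M) * \<i> ^ M * (fact (M + N) / fact (M + N)) * (fact N / fact N) * ((2 ^ M * 2 ^ (N - M)) / 2 ^ N)
      * ((- 1 / 4) ^ q * 4 ^ q) * complex_of_real c * P ^ q * V ^ M * Zs"
    by (simp add: power_mult_distrib field_simps)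
  also have "\<dots> = \<i> ^ M * (-1) ^ q * (-1) ^ (N + M) * complex_of_real c * P ^ q * V ^ M * Zs"
    unfolding s1 p4 p2[symmetric] using f1 by simp
  finally show ?thesis .
qed

definition xi :: "real ^ 3 \<Rightarrow> complex" where
  "xi x = (complex_of_real (x$1) + \<i> * complex_of_real (x$2)) / 2"
definition eta :: "real ^ 3 \<Rightarrow> complex" where
  "eta x = (complex_of_real (x$1) - \<i> * complex_of_real (x$2)) / 2"
definition zeta :: "real ^ 3 \<Rightarrow> complex" where
  "zeta x = complex_of_real (x$3)"

lemma Complex_xi: "Complex (x$1) (x$2) = 2 * xi x"
  by (simp add: xi_def Complex_eq)
lemma cnj_Complex_eta: "cnj (Complex (x$1) (x$2)) = 2 * eta x"
  by (simp add: eta_def Complex_eq)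
lemma cnj_xi: "cnj (xi x) = eta x"
  by (simp add: xi_def eta_def)
lemma S_xi_eta: "complex_of_real (x$1 ^ 2 + x$2 ^ 2) = 4 * (xi x * eta x)"
  by (simp add: xi_def eta_def field_simps power2_eq_square)

lemma solid_R_poly_nz:
  assumes n: "0 \<le> n" "\<bar>m\<bar> \<le> n" and x: "x \<noteq> 0"
  shows "solid_R n m x = Pc n m (xi x) (eta x) (zeta x)"
proof -
  define N where "N = nat n"
  define M where "M = nat \<bar>m\<bar>"
  define S where "S = x$1 ^ 2 + x$2 ^ 2"
  define V where "V = (if m \<ge> 0 then xi x else eta x)"
  define A where "A = (-1) ^ N * \<i> ^ M / fact (M + N) * complex_of_real ((-1) ^ M / (2 ^ N * fact N))"
  have MN: "M \<le> N" using n by (simp add: N_def M_def nat_mono)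
  have nm: "nat (n + \<bar>m\<bar>) = M + N" using n by (simp add: N_def M_def nat_add_distrib)
  have mu: "cos (sph_theta x) = x$3 / norm x" by (rule cos_theta[OF x])
  have AL: "assoc_legendre N M \<mu> = (-1) ^ M * sqrt (1 - \<mu>\<^sup>2) ^ M / (2 ^ N * fact N) * Lfun N (M + N) \<mu>" for \<mu>
    using RL[of "M + N" N] MN by (simp add: assoc_legendre_def)
  have R1: "norm x ^ N * assoc_legendre N M (cos (sph_theta x))
      = (-1) ^ M / (2 ^ N * fact N) * (sqrt S ^ M * (\<Sum>q\<le>N. CC N (M + N) q * S ^ q * pw (x$3) (int N - int M - 2 * int q)))"
    unfolding mu AL rad_part[OF x MN, folded S_def, symmetric] by (simp add: field_simps)
  have W: "complex_of_real (sqrt S ^ M) * exp (\<i> * of_int m * complex_of_real (sph_phi x)) = 2 ^ M * V ^ M"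
    unfolding S_def M_def sph_phi_def ang V_def
    by (simp add: Complex_xi cnj_xi power_mult_distrib)
  have "solid_R n m x = A * (complex_of_real (\<Sum>q\<le>N. CC N (M + N) q * S ^ q * pw (x$3) (int N - int M - 2 * int q))
       * (complex_of_real (sqrt S ^ M) * exp (\<i> * of_int m * complex_of_real (sph_phi x))))"
  proof -
    have c: "\<not> (n < 0 \<or> \<bar>m\<bar> > n)" using n by auto
    have "solid_R n m x = ((-1) ^ N * \<i> ^ M / fact (M + N)) * complex_of_real (norm x ^ N * assoc_legendre N M (cos (sph_theta x)))
       * exp (\<i> * of_int m * complex_of_real (sph_phi x))"
      unfolding solid_R_def if_not_P[OF c] nm N_def M_def ..
    also have "\<dots> = A * (complex_of_real (\<Sum>q\<le>N. CC N (M + N) q * S ^ q * pw (x$3) (int N - int M - 2 * int q))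
       * (complex_of_real (sqrt S ^ M) * exp (\<i> * of_int m * complex_of_real (sph_phi x))))"
      unfolding R1 A_def by (simp add: field_simps)
    finally show ?thesis .
  qed
  also have "\<dots> = (\<Sum>q\<le>N. A * (2 ^ M * V ^ M) * complex_of_real (CC N (M + N) q * S ^ q * pw (x$3) (int N - int M - 2 * int q)))"
    unfolding W by (simp add: sum_distrib_left mult_ac)
  also have "\<dots> = Pc n m (xi x) (eta x) (zeta x)"
    unfolding Pc_q[OF n] N_def[symmetric] M_def[symmetric] V_def[symmetric]
  proof (rule sum.cong[OF refl])
    fix q
    define c where "c = invf (int q + int M) * invf (int q) * invf (int N - int M - 2 * int q)"
    show "A * (2 ^ M * V ^ M) * complex_of_real (CC N (M + N) q * S ^ q * pw (x$3) (int N - int M - 2 * int q)) =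
      \<i> ^ M * (-1) ^ q * (-1) ^ (N + M) * complex_of_real c * (xi x * eta x) ^ q * V ^ M * zeta x ^ (N - M - 2 * q)"
    proof (cases "invf (int N - int M - 2 * int q) = 0")
      case True then show ?thesis by (simp add: CC_spec[OF MN] c_def)
    next
      case False
      then have ge: "int N - int M - 2 * int q = int (N - M - 2 * q)" using invf_nz by fastforce
      have pwx: "pw (x$3) (int N - int M - 2 * int q) = x$3 ^ (N - M - 2 * q)" unfolding ge by (simp add: pw_def)
      have "A * (2 ^ M * V ^ M) * complex_of_real (CC N (M + N) q * S ^ q * pw (x$3) (int N - int M - 2 * int q))
         = A * (2 ^ M * V ^ M) * complex_of_real (fact (M + N) * fact N * 2 ^ (N - M) * (- 1 / 4) ^ q * c)
           * (4 * (xi x * eta x)) ^ q * zeta x ^ (N - M - 2 * q)"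
        unfolding CC_spec[OF MN] pwx c_def zeta_def S_xi_eta[symmetric] S_def by (simp add: mult_ac)
      also have "\<dots> = \<i> ^ M * (-1) ^ q * (-1) ^ (N + M) * complex_of_real c * (xi x * eta x) ^ q * V ^ M * zeta x ^ (N - M - 2 * q)"
        unfolding A_def by (rule term_alg[OF MN])
      finally show ?thesis .
    qed
  qed
  finally show ?thesis .
qed

lemma Trip_empty: "n < 0 \<or> \<bar>m\<bar> > n \<Longrightarrow> Trip n m = {}"
  by (auto simp: Trip_def)

lemma Trip_00: "Trip 0 0 = {(0, 0, 0)}"
  by (auto simp: Trip_def)

lemma solid_R_poly: "solid_R n m x = Pc n m (xi x) (eta x) (zeta x)"
proof (cases "n < 0 \<or> \<bar>m\<bar> > n")
  case True
  then show ?thesis by (simp add: solid_R_def Pc_def Trip_empty)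
next
  case False
  then have n: "0 \<le> n" "\<bar>m\<bar> \<le> n" by auto
  show ?thesis
  proof (cases "x = 0")
    case False then show ?thesis using solid_R_poly_nz[OF n] by blast
  next
    case x0: True
    have z: "xi x = 0" "eta x = 0" "zeta x = 0" using x0 by (simp_all add: xi_def eta_def zeta_def)
    show ?thesis
    proof (cases "n = 0")
      case True
      then have "m = 0" using n by simp
      then show ?thesis using True x0 z
        by (simp add: solid_R_def Pc_def Trip_00 kap_def assoc_legendre_def sph_theta_def)
    next
      case False
      then have np: "nat n > 0" using n by simp
      have "solid_R n m x = 0" using np x0 n by (simp add: solid_R_def)
      moreover have "Pc n m 0 0 0 = 0"
        unfolding Pc_def
      proof (rule sum.neutral, clarify)
        fix a b s assume "(a, b, s) \<in> Trip n m"
        then have "a + b + s > 0" using False n by (auto simp: Trip_def)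
        then show "kap a b s * 0 ^ a * 0 ^ b * 0 ^ s = 0" by auto
      qed
      ultimately show ?thesis using z by simp
    qed
  qed
qed


definition DR :: "int \<Rightarrow> int \<Rightarrow> real ^ 3 \<Rightarrow> real ^ 3 \<Rightarrow> complex" where
  "DR n m y d = DPc n m (xi y) (eta y) (zeta y) (xi d) (eta d) (zeta d)"

lemma xi_lin: "xi (p + t *\<^sub>R d) = xi p + of_real t * xi d"
  by (simp add: xi_def field_simps)
lemma eta_lin: "eta (p + t *\<^sub>R d) = eta p + of_real t * eta d"
  by (simp add: eta_def field_simps)
lemma zeta_lin: "zeta (p + t *\<^sub>R d) = zeta p + of_real t * zeta d"
  by (simp add: zeta_def field_simps)

lemma DR_alt: "DR n m y d = xi d * (\<i> * solid_R (n - 1) (m - 1) y) + eta d * (\<i> * solid_R (n - 1) (m + 1) y)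
   + zeta d * (- solid_R (n - 1) m y)"
  by (simp add: DR_def DPc_def solid_R_poly)

lemma DR_euler: "DR n m y y = of_int n * solid_R n m y"
  by (simp add: DR_def Pc_euler solid_R_poly)

lemma solid_R_line_deriv:
  "((\<lambda>t. solid_R n m (p + t *\<^sub>R d)) has_vector_derivative DR n m (p + t *\<^sub>R d) d) (at t within S)"
proof -
  define G where "G w = Pc n m (xi p + w * xi d) (eta p + w * eta d) (zeta p + w * zeta d)" for w
  have e: "(\<lambda>t. solid_R n m (p + t *\<^sub>R d)) = (\<lambda>t. G (of_real t))"
    by (simp add: G_def solid_R_poly xi_lin eta_lin zeta_lin mult.commute)
  have "(G has_field_derivative DR n m (p + t *\<^sub>R d) d) (at (of_real t))"
    unfolding G_def DR_def xi_lin eta_lin zeta_lin by (rule Pc_deriv)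
  then show ?thesis unfolding e by (rule has_vector_derivative_real_field)
qed

lemma cont_solid_R: "continuous_on A (solid_R n m)"
  unfolding solid_R_poly[abs_def] Pc_def xi_def eta_def zeta_def case_prod_unfold
  by (intro continuous_intros) auto


definition I2 :: "(real \<Rightarrow> real \<Rightarrow> complex) \<Rightarrow> complex" where
  "I2 F = integral {0..1} (\<lambda>u. integral {0..1} (\<lambda>t. F u t))"

lemma cont_slice1:
  fixes F :: "real \<Rightarrow> real \<Rightarrow> complex"
  assumes "continuous_on UNIV (\<lambda>(u, t). F u t)"
  shows "continuous_on A (F u)"
proof -
  have "continuous_on A ((\<lambda>(u, t). F u t) \<circ> (\<lambda>t. (u, t)))"
    by (rule continuous_on_compose[OF _ continuous_on_subset[OF assms]]) (auto intro!: continuous_intros)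
  then show ?thesis by (simp add: o_def)
qed

lemma cont_slice2:
  fixes F :: "real \<Rightarrow> real \<Rightarrow> complex"
  assumes "continuous_on UNIV (\<lambda>(u, t). F u t)"
  shows "continuous_on A (\<lambda>u. F u t)"
proof -
  have "continuous_on A ((\<lambda>(u, t). F u t) \<circ> (\<lambda>u. (u, t)))"
    by (rule continuous_on_compose[OF _ continuous_on_subset[OF assms]]) (auto intro!: continuous_intros)
  then show ?thesis by (simp add: o_def)
qed

lemma cont_outer:
  fixes F :: "real \<Rightarrow> real \<Rightarrow> complex"
  assumes "continuous_on UNIV (\<lambda>(u, t). F u t)"
  shows "continuous_on A (\<lambda>u. integral {0..1} (F u))"
proof -
  have "continuous_on UNIV (\<lambda>u. integral (cbox 0 1) (F u))"
    by (rule integral_continuous_on_param) (rule continuous_on_subset[OF assms], simp)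
  then show ?thesis by (auto intro: continuous_on_subset)
qed

lemma I2_add:
  assumes "continuous_on UNIV (\<lambda>(u, t). F u t)" "continuous_on UNIV (\<lambda>(u, t). G u t)"
  shows "I2 (\<lambda>u t. F u t + G u t) = I2 F + I2 G"
proof -
  have "integral {0..1} (\<lambda>t. F u t + G u t) = integral {0..1} (F u) + integral {0..1} (G u)" for u
    by (rule integral_add; rule integrable_continuous_interval; rule cont_slice1; fact)
  then have "I2 (\<lambda>u t. F u t + G u t) = integral {0..1} (\<lambda>u. integral {0..1} (F u) + integral {0..1} (G u))"
    unfolding I2_def by simp
  also have "\<dots> = I2 F + I2 G"
    unfolding I2_def
    by (rule integral_add; rule integrable_continuous_interval; rule cont_outer; fact)
  finally show ?thesis .
qed

lemma I2_diff:
  assumes "continuous_on UNIV (\<lambda>(u, t). F u t)" "continuous_on UNIV (\<lambda>(u, t). G u t)"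
  shows "I2 (\<lambda>u t. F u t - G u t) = I2 F - I2 G"
proof -
  have "integral {0..1} (\<lambda>t. F u t - G u t) = integral {0..1} (F u) - integral {0..1} (G u)" for u
    by (rule integral_diff; rule integrable_continuous_interval; rule cont_slice1; fact)
  then have "I2 (\<lambda>u t. F u t - G u t) = integral {0..1} (\<lambda>u. integral {0..1} (F u) - integral {0..1} (G u))"
    unfolding I2_def by simp
  also have "\<dots> = I2 F - I2 G"
    unfolding I2_def
    by (rule integral_diff; rule integrable_continuous_interval; rule cont_outer; fact)
  finally show ?thesis .
qed

lemma I2_cmult: "I2 (\<lambda>u t. c * F u t) = c * I2 F"
  unfolding I2_def by simp

lemma I2_cong: "(\<And>u t. u \<in> {0..1} \<Longrightarrow> t \<in> {0..1} \<Longrightarrow> F u t = G u t) \<Longrightarrow> I2 F = I2 G"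
  unfolding I2_def by (intro Henstock_Kurzweil_Integration.integral_cong) auto

lemma I2_zero_outer:
  fixes K P :: "real \<Rightarrow> real \<Rightarrow> complex"
  assumes c: "continuous_on UNIV (\<lambda>(u, t). K u t)"
    and d: "\<And>u t. ((\<lambda>u. P u t) has_vector_derivative K u t) (at u)"
    and b: "\<And>t. P 1 t = P 0 t"
  shows "I2 K = 0"
proof -
  have "I2 K = integral (cbox 0 1) (\<lambda>t. integral (cbox 0 1) (\<lambda>u. K u t))"
    unfolding I2_def cbox_interval[symmetric]
    by (rule integral_swap_continuous) (rule continuous_on_subset[OF c], simp)
  also have "\<dots> = integral (cbox 0 1) (\<lambda>t::real. 0::complex)"
  proof (rule Henstock_Kurzweil_Integration.integral_cong)
    fix t :: real
    have "((\<lambda>u. K u t) has_integral (P 1 t - P 0 t)) {0..1}"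
      by (rule fundamental_theorem_of_calculus) (auto intro: has_vector_derivative_at_within d)
    then show "integral (cbox 0 1) (\<lambda>u. K u t) = 0"
      using b by (simp add: cbox_interval integral_unique)
  qed
  finally show ?thesis by simp
qed

lemma I2_inner_ftc:
  fixes K P :: "real \<Rightarrow> real \<Rightarrow> complex"
  assumes d: "\<And>u t. ((\<lambda>t. P u t) has_vector_derivative K u t) (at t)"
  shows "I2 K = integral {0..1} (\<lambda>u. P u 1 - P u 0)"
  unfolding I2_def
proof (rule Henstock_Kurzweil_Integration.integral_cong)
  fix u :: real
  have "((\<lambda>t. K u t) has_integral (P u 1 - P u 0)) {0..1}"
    by (rule fundamental_theorem_of_calculus) (auto intro: has_vector_derivative_at_within d)
  then show "integral {0..1} (K u) = P u 1 - P u 0" by (simp add: integral_unique)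
qed


lemma cont_R [continuous_intros]:
  "continuous_on A f \<Longrightarrow> continuous_on A (\<lambda>z. solid_R n m (f z))"
  by (rule continuous_on_compose2[OF cont_solid_R[of UNIV]]) auto

lemma Q_eq: "Q_fun v1 ru rv n m b c u v = (u ^ b * v ^ c) *\<^sub>R solid_R n m (u *\<^sub>R ru + v *\<^sub>R rv + v1)"
  by (simp add: Q_fun_def r_q_def scaleR_conv_of_real mult.commute)

lemma cont_Q: "continuous_on UNIV (\<lambda>(u, t). (1 - u) *\<^sub>R Q_fun v1 ru rv n m b c u ((1 - u) * t))"
  unfolding Q_eq case_prod_unfold by (intro continuous_intros)

lemma psi_I2: "psi v1 ru rv n m b c = I2 (\<lambda>u t. (1 - u) *\<^sub>R Q_fun v1 ru rv n m b c u ((1 - u) * t))"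
  unfolding psi_def I2_def
proof (rule Henstock_Kurzweil_Integration.integral_cong)
  fix u :: real assume u: "u \<in> {0..1}"
  let ?f = "Q_fun v1 ru rv n m b c u"
  have cf: "continuous_on {0..1 - u} ?f"
    unfolding Q_eq by (intro continuous_intros)
  have "((\<lambda>t. (1 - u) *\<^sub>R ?f ((1 - u) * t)) has_integral integral {(1 - u) * 0..(1 - u) * 1} ?f) {0..1}"
    by (rule has_integral_substitution[where c=0 and d="1 - u"])
       (use u in \<open>auto intro!: derivative_eq_intros mult_le_cancel_left1 cf simp: mult_left_le\<close>)
  then have "((\<lambda>t. (1 - u) *\<^sub>R ?f ((1 - u) * t)) has_integral integral {0..1 - u} ?f) {0..1}"
    by simp
  then show "integral {0..1 - u} ?f = integral {0..1} (\<lambda>t. (1 - u) *\<^sub>R ?f ((1 - u) * t))"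
    by (rule integral_unique[symmetric])
qed

lemma key_alg:
  fixes u t v g gu gt a bb w R nn B C :: complex
  assumes e: "nn * R = a * u + bb * v + w" and v: "v = (1 - u) * t"
    and pg: "(1 - u) * u * gu + t * gt = (1 - u) * (B + C) * g"
  shows "(1 - u) * u * (g * (a - t * bb) + gu * R) + t * (g * ((1 - u) * bb) + gt * R) + 2 * (1 - u) * (g * R)
     = (1 - u) * ((nn + B + C + 2) * (g * R) - g * w)"
proof -
  have "(1 - u) * u * (g * (a - t * bb) + gu * R) + t * (g * ((1 - u) * bb) + gt * R) + 2 * (1 - u) * (g * R)
     - (1 - u) * ((nn + B + C + 2) * (g * R) - g * w)
     = (1 - u) * g * (a * u + bb * v + w - nn * R) + R * ((1 - u) * u * gu + t * gt - (1 - u) * (B + C) * g)"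
    unfolding v by (simp add: algebra_simps)
  also have "\<dots> = 0" using e pg by simp
  finally show ?thesis by simp
qed

lemma PG:
  fixes u t :: real
  shows "(1 - u) * u * (of_nat b * u ^ (b - 1) * ((1 - u) * t) ^ c - t * (of_nat c * u ^ b * ((1 - u) * t) ^ (c - 1)))
     + t * ((1 - u) * (of_nat c * u ^ b * ((1 - u) * t) ^ (c - 1)))
     = (1 - u) * (of_nat b + of_nat c) * (u ^ b * ((1 - u) * t) ^ c)"
proof -
  have 1: "u * (of_nat b * u ^ (b - 1)) = of_nat b * u ^ b" by (cases b) auto
  have 2: "((1 - u) * t) * (of_nat c * ((1 - u) * t) ^ (c - 1)) = of_nat c * ((1 - u) * t) ^ c" by (cases c) auto
  have "(1 - u) * u * (of_nat b * u ^ (b - 1) * ((1 - u) * t) ^ c - t * (of_nat c * u ^ b * ((1 - u) * t) ^ (c - 1)))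
     + t * ((1 - u) * (of_nat c * u ^ b * ((1 - u) * t) ^ (c - 1)))
     = (1 - u) * ((u * (of_nat b * u ^ (b - 1))) * ((1 - u) * t) ^ c)
       + (1 - u) * u ^ b * (((1 - u) * t) * (of_nat c * ((1 - u) * t) ^ (c - 1)))"
    by (simp add: algebra_simps)
  also have "\<dots> = (1 - u) * (of_nat b + of_nat c) * (u ^ b * ((1 - u) * t) ^ c)"
    unfolding 1 2 by (simp add: algebra_simps)
  finally show ?thesis .
qed

lemma xi_add: "xi (a + d) = xi a + xi d" and xi_scale: "xi (r *\<^sub>R d) = of_real r * xi d"
  and xi_diff: "xi (a - d) = xi a - xi d"
  by (simp_all add: xi_def field_simps)
lemma eta_add: "eta (a + d) = eta a + eta d" and eta_scale: "eta (r *\<^sub>R d) = of_real r * eta d"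
  and eta_diff: "eta (a - d) = eta a - eta d"
  by (simp_all add: eta_def field_simps)
lemma zeta_add: "zeta (a + d) = zeta a + zeta d" and zeta_scale: "zeta (r *\<^sub>R d) = of_real r * zeta d"
  and zeta_diff: "zeta (a - d) = zeta a - zeta d"
  by (simp_all add: zeta_def field_simps)

lemma DR_add: "DR n m y (a + d) = DR n m y a + DR n m y d"
  by (simp add: DR_def DPc_def xi_add eta_add zeta_add algebra_simps)
lemma DR_diff: "DR n m y (a - d) = DR n m y a - DR n m y d"
  by (simp add: DR_def DPc_def xi_diff eta_diff zeta_diff algebra_simps)
lemma DR_scale: "DR n m y (r *\<^sub>R d) = of_real r * DR n m y d"
  by (simp add: DR_def DPc_def xi_scale eta_scale zeta_scale algebra_simps)

definition pp :: "real ^ 3 \<Rightarrow> real ^ 3 \<Rightarrow> real ^ 3 \<Rightarrow> real \<Rightarrow> real \<Rightarrow> real ^ 3" where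
  "pp v1 ru rv u t = u *\<^sub>R ru + ((1 - u) * t) *\<^sub>R rv + v1"

definition hh where
  "hh v1 ru rv n m b c u t = (u ^ b * ((1 - u) * t) ^ c) *\<^sub>R solid_R n m (pp v1 ru rv u t)"

definition hu where
  "hu v1 ru rv n m b c u t = (u ^ b * ((1 - u) * t) ^ c) *\<^sub>R DR n m (pp v1 ru rv u t) (ru - t *\<^sub>R rv)
    + (of_nat b * u ^ (b - 1) * ((1 - u) * t) ^ c - t * (of_nat c * u ^ b * ((1 - u) * t) ^ (c - 1))) *\<^sub>R solid_R n m (pp v1 ru rv u t)"

definition ht where
  "ht v1 ru rv n m b c u t = (u ^ b * ((1 - u) * t) ^ c) *\<^sub>R DR n m (pp v1 ru rv u t) ((1 - u) *\<^sub>R rv)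
    + ((1 - u) * (of_nat c * u ^ b * ((1 - u) * t) ^ (c - 1))) *\<^sub>R solid_R n m (pp v1 ru rv u t)"

lemma hh_du: "((\<lambda>u. hh v1 ru rv n m b c u t) has_vector_derivative hu v1 ru rv n m b c u t) (at u)"
proof -
  have e: "pp v1 ru rv u t = (t *\<^sub>R rv + v1) + u *\<^sub>R (ru - t *\<^sub>R rv)" for u
    by (simp add: pp_def algebra_simps)
  have l: "((\<lambda>u. solid_R n m (pp v1 ru rv u t)) has_vector_derivative DR n m (pp v1 ru rv u t) (ru - t *\<^sub>R rv)) (at u)"
    unfolding e by (rule solid_R_line_deriv)
  have g: "((\<lambda>u. u ^ b * ((1 - u) * t) ^ c) has_real_derivative
      (of_nat b * u ^ (b - 1) * ((1 - u) * t) ^ c - t * (of_nat c * u ^ b * ((1 - u) * t) ^ (c - 1)))) (at u)"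
    by (rule derivative_eq_intros refl | simp add: algebra_simps)+
  show ?thesis unfolding hh_def hu_def
    by (rule has_vector_derivative_scaleR[OF g l])
qed

lemma hh_dt: "((\<lambda>t. hh v1 ru rv n m b c u t) has_vector_derivative ht v1 ru rv n m b c u t) (at t)"
proof -
  have e: "pp v1 ru rv u t = (u *\<^sub>R ru + v1) + t *\<^sub>R ((1 - u) *\<^sub>R rv)" for t
    by (simp add: pp_def algebra_simps)
  have l: "((\<lambda>t. solid_R n m (pp v1 ru rv u t)) has_vector_derivative DR n m (pp v1 ru rv u t) ((1 - u) *\<^sub>R rv)) (at t)"
    unfolding e by (rule solid_R_line_deriv)
  have g: "((\<lambda>t. u ^ b * ((1 - u) * t) ^ c) has_real_derivative
      ((1 - u) * (of_nat c * u ^ b * ((1 - u) * t) ^ (c - 1)))) (at t)"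
    by (rule derivative_eq_intros refl | simp add: algebra_simps)+
  show ?thesis unfolding hh_def ht_def
    by (rule has_vector_derivative_scaleR[OF g l])
qed

lemma point_id:
  "((1 - u) * u) *\<^sub>R hu v1 ru rv n m b c u t + t *\<^sub>R ht v1 ru rv n m b c u t + (2 * (1 - u)) *\<^sub>R hh v1 ru rv n m b c u t
   = (1 - u) *\<^sub>R (of_int (n + int b + int c + 2) * Q_fun v1 ru rv n m b c u ((1 - u) * t)
      - (\<i> * xi v1 * Q_fun v1 ru rv (n - 1) (m - 1) b c u ((1 - u) * t)
       + \<i> * eta v1 * Q_fun v1 ru rv (n - 1) (m + 1) b c u ((1 - u) * t)
       - zeta v1 * Q_fun v1 ru rv (n - 1) m b c u ((1 - u) * t)))"
proof -
  define y where "y = pp v1 ru rv u t"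
  define v where "v = (1 - u) * t"
  define g where "g = u ^ b * v ^ c"
  define gu where "gu = of_nat b * u ^ (b - 1) * v ^ c - t * (of_nat c * u ^ b * v ^ (c - 1))"
  define gt where "gt = (1 - u) * (of_nat c * u ^ b * v ^ (c - 1))"
  define R where "R = solid_R n m y"
  define a where "a = DR n m y ru"
  define bb where "bb = DR n m y rv"
  define w where "w = DR n m y v1"
  have yy: "y = u *\<^sub>R ru + v *\<^sub>R rv + v1" by (simp add: y_def v_def pp_def)
  have Q0: "Q_fun v1 ru rv k l b c u ((1 - u) * t) = complex_of_real g * solid_R k l y" for k l
    unfolding Q_eq by (simp add: g_def v_def yy scaleR_conv_of_real)
  have wdef: "w = xi v1 * (\<i> * solid_R (n - 1) (m - 1) y) + eta v1 * (\<i> * solid_R (n - 1) (m + 1) y)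
     + zeta v1 * (- solid_R (n - 1) m y)" unfolding w_def by (rule DR_alt)
  have e: "of_int n * R = a * of_real u + bb * of_real v + w"
    unfolding R_def DR_euler[symmetric] a_def bb_def w_def
    by (subst (2) yy) (simp add: DR_add DR_scale mult.commute)
  have pg: "(1 - of_real u) * of_real u * of_real gu + of_real t * of_real gt
      = (1 - of_real u) * (of_nat b + of_nat c) * (complex_of_real g)"
  proof -
    have "(1 - u) * u * gu + t * gt = (1 - u) * (of_nat b + of_nat c) * g"
      unfolding gu_def gt_def g_def v_def by (rule PG)
    then have "complex_of_real ((1 - u) * u * gu + t * gt) = complex_of_real ((1 - u) * (of_nat b + of_nat c) * g)"
      by simp
    then show ?thesis by simp
  qed
  have k: "(1 - of_real u) * of_real u * (of_real g * (a - of_real t * bb) + of_real gu * R)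
      + of_real t * (of_real g * ((1 - of_real u) * bb) + of_real gt * R) + 2 * (1 - of_real u) * (of_real g * R)
     = (1 - of_real u) * ((of_int n + of_nat b + of_nat c + 2) * (of_real g * R) - of_real g * w)"
    by (rule key_alg[OF e _ pg]) (simp add: v_def)
  have hu': "hu v1 ru rv n m b c u t = complex_of_real g * (a - of_real t * bb) + of_real gu * R"
    unfolding hu_def y_def[symmetric] R_def[symmetric] v_def[symmetric] g_def[symmetric] gu_def[symmetric]
    unfolding DR_diff DR_scale a_def[symmetric] bb_def[symmetric] by (simp add: scaleR_conv_of_real)
  have ht': "ht v1 ru rv n m b c u t = complex_of_real g * ((1 - of_real u) * bb) + of_real gt * R"
    unfolding ht_def y_def[symmetric] R_def[symmetric] v_def[symmetric] g_def[symmetric] gt_def[symmetric]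
    unfolding DR_scale bb_def[symmetric] by (simp add: scaleR_conv_of_real)
  have hh': "hh v1 ru rv n m b c u t = complex_of_real g * R"
    unfolding hh_def y_def[symmetric] R_def[symmetric] v_def[symmetric] g_def[symmetric]
    by (simp add: scaleR_conv_of_real)
  show ?thesis
    unfolding hu' ht' hh' Q0 scaleR_conv_of_real R_def[symmetric]
    using k unfolding wdef by (simp add: algebra_simps)
qed

lemma cont_DR [continuous_intros]:
  "continuous_on A f \<Longrightarrow> continuous_on A (\<lambda>z. DR n m (f z) d)"
  unfolding DR_alt by (intro continuous_intros)

lemma cont_pp [continuous_intros]: "continuous_on A (\<lambda>z. pp v1 ru rv (fst z) (snd z))"
  unfolding pp_def by (intro continuous_intros)

lemma cont_hh: "continuous_on UNIV (\<lambda>(u, t). hh v1 ru rv n m b c u t)"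
  unfolding hh_def case_prod_unfold by (intro continuous_intros)
lemma cont_hu: "continuous_on UNIV (\<lambda>(u, t). hu v1 ru rv n m b c u t)"
  unfolding hu_def case_prod_unfold DR_diff DR_scale by (intro continuous_intros)
lemma cont_ht: "continuous_on UNIV (\<lambda>(u, t). ht v1 ru rv n m b c u t)"
  unfolding ht_def case_prod_unfold DR_diff DR_scale by (intro continuous_intros)

lemma LHS_j:
  "I2 (\<lambda>u t. ((1 - u) * u) *\<^sub>R hu v1 ru rv n m b c u t + t *\<^sub>R ht v1 ru rv n m b c u t + (2 * (1 - u)) *\<^sub>R hh v1 ru rv n m b c u t)
   = j_fun v1 ru rv n m b c"
proof -
  let ?h = "hh v1 ru rv n m b c" and ?hu = "hu v1 ru rv n m b c" and ?ht = "ht v1 ru rv n m b c"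
  have c1: "continuous_on UNIV (\<lambda>(u, t). t *\<^sub>R ?ht u t + ?h u t)"
    using cont_ht[of v1 ru rv n m b c] cont_hh[of v1 ru rv n m b c]
    unfolding case_prod_unfold by (intro continuous_intros) auto
  have c2: "continuous_on UNIV (\<lambda>(u, t). ((1 - u) * u) *\<^sub>R ?hu u t + (1 - 2 * u) *\<^sub>R ?h u t)"
    using cont_hu[of v1 ru rv n m b c] cont_hh[of v1 ru rv n m b c]
    unfolding case_prod_unfold by (intro continuous_intros) auto
  have "I2 (\<lambda>u t. ((1 - u) * u) *\<^sub>R ?hu u t + t *\<^sub>R ?ht u t + (2 * (1 - u)) *\<^sub>R ?h u t)
     = I2 (\<lambda>u t. (t *\<^sub>R ?ht u t + ?h u t) + (((1 - u) * u) *\<^sub>R ?hu u t + (1 - 2 * u) *\<^sub>R ?h u t))"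
    by (rule I2_cong) (simp add: algebra_simps scaleR_conv_of_real)
  also have "\<dots> = I2 (\<lambda>u t. t *\<^sub>R ?ht u t + ?h u t) + I2 (\<lambda>u t. ((1 - u) * u) *\<^sub>R ?hu u t + (1 - 2 * u) *\<^sub>R ?h u t)"
    by (rule I2_add[OF c1 c2])
  also have "I2 (\<lambda>u t. ((1 - u) * u) *\<^sub>R ?hu u t + (1 - 2 * u) *\<^sub>R ?h u t) = 0"
  proof (rule I2_zero_outer[where P="\<lambda>u t. ((1 - u) * u) *\<^sub>R ?h u t"])
    show "continuous_on UNIV (\<lambda>(u, t). ((1 - u) * u) *\<^sub>R ?hu u t + (1 - 2 * u) *\<^sub>R ?h u t)" by (rule c2)
    fix u t :: real
    have d: "((\<lambda>u. (1 - u) * u) has_real_derivative (1 - 2 * u)) (at u)"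
      by (rule derivative_eq_intros refl | simp add: algebra_simps)+
    show "((\<lambda>u. ((1 - u) * u) *\<^sub>R ?h u t) has_vector_derivative ((1 - u) * u) *\<^sub>R ?hu u t + (1 - 2 * u) *\<^sub>R ?h u t) (at u)"
      by (rule has_vector_derivative_scaleR[OF d hh_du])
  qed simp
  also have "I2 (\<lambda>u t. t *\<^sub>R ?ht u t + ?h u t) = integral {0..1} (\<lambda>u. 1 *\<^sub>R ?h u 1 - 0 *\<^sub>R ?h u 0)"
  proof (rule I2_inner_ftc[where P="\<lambda>u t. t *\<^sub>R ?h u t"])
    fix u t :: real
    have d: "((\<lambda>t. t) has_real_derivative 1) (at t)" by (rule DERIV_ident)
    show "((\<lambda>t. t *\<^sub>R ?h u t) has_vector_derivative t *\<^sub>R ?ht u t + ?h u t) (at t)"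
      using has_vector_derivative_scaleR[OF d hh_dt] by simp
  qed
  also have "\<dots> = j_fun v1 ru rv n m b c"
    unfolding j_fun_def by (rule Henstock_Kurzweil_Integration.integral_cong) (simp add: hh_def Q_eq pp_def)
  finally show ?thesis by simp
qed

lemma main:
  assumes "n \<ge> 0"
  shows "psi v1 ru rv n m b c =
    (\<i> * ((complex_of_real (v1 $ 1) + \<i> * complex_of_real (v1 $ 2)) / 2) * psi v1 ru rv (n - 1) (m - 1) b c
     + \<i> * ((complex_of_real (v1 $ 1) - \<i> * complex_of_real (v1 $ 2)) / 2) * psi v1 ru rv (n - 1) (m + 1) b c
     - complex_of_real (v1 $ 3) * psi v1 ru rv (n - 1) m b c
     + j_fun v1 ru rv n m b c) / of_int (n + int b + int c + 2)"
proof -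
  define F where "F k l u t = (1 - u) *\<^sub>R Q_fun v1 ru rv k l b c u ((1 - u) * t)" for k l u t
  define K where "K = (of_int (n + int b + int c + 2) :: complex)"
  have cF: "continuous_on UNIV (\<lambda>(u, t). F k l u t)" for k l unfolding F_def by (rule cont_Q)
  have cF': "continuous_on UNIV (\<lambda>(u, t). c' * F k l u t)" for k l c'
    using cF[of k l] unfolding case_prod_unfold by (intro continuous_intros)
  have psiF: "psi v1 ru rv k l b c = I2 (F k l)" for k l unfolding F_def psi_I2 ..
  have "j_fun v1 ru rv n m b c = I2 (\<lambda>u t. K * F n m u t
      - (\<i> * xi v1 * F (n - 1) (m - 1) u t + \<i> * eta v1 * F (n - 1) (m + 1) u t - zeta v1 * F (n - 1) m u t))"
    unfolding LHS_j[symmetric] point_id F_def K_def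
    by (rule I2_cong) (simp add: algebra_simps)
  also have "\<dots> = K * psi v1 ru rv n m b c
      - (\<i> * xi v1 * psi v1 ru rv (n - 1) (m - 1) b c + \<i> * eta v1 * psi v1 ru rv (n - 1) (m + 1) b c
         - zeta v1 * psi v1 ru rv (n - 1) m b c)"
  proof -
    have c3: "continuous_on UNIV (\<lambda>(u, t). \<i> * xi v1 * F (n - 1) (m - 1) u t + \<i> * eta v1 * F (n - 1) (m + 1) u t)"
      using continuous_on_add[OF cF'[of "\<i> * xi v1" "n - 1" "m - 1"] cF'[of "\<i> * eta v1" "n - 1" "m + 1"]]
      unfolding case_prod_unfold by simp
    have c4: "continuous_on UNIV (\<lambda>(u, t). \<i> * xi v1 * F (n - 1) (m - 1) u t + \<i> * eta v1 * F (n - 1) (m + 1) u t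
        - zeta v1 * F (n - 1) m u t)"
      using continuous_on_diff[OF c3 cF'[of "zeta v1" "n - 1" m]] unfolding case_prod_unfold by simp
    show ?thesis
      unfolding I2_diff[OF cF' c4] I2_diff[OF c3 cF'] I2_add[OF cF' cF'] I2_cmult psiF
      by (simp add: mult.assoc)
  qed
  finally have eq: "j_fun v1 ru rv n m b c = K * psi v1 ru rv n m b c
      - (\<i> * xi v1 * psi v1 ru rv (n - 1) (m - 1) b c + \<i> * eta v1 * psi v1 ru rv (n - 1) (m + 1) b c
         - zeta v1 * psi v1 ru rv (n - 1) m b c)" .
  have "n + int b + int c + 2 \<noteq> 0" using assms by linarith
  then have K0: "K \<noteq> 0" unfolding K_def by (metis of_int_eq_0_iff)
  show ?thesis
    unfolding K_def[symmetric] eq using K0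
    by (simp add: xi_def eta_def zeta_def field_simps)
qed


theorem lemma1:
  fixes v1 ru rv :: "real ^ 3" and n m :: int and b c :: nat
  assumes "independent {ru, rv}" and "ru \<noteq> rv"
    and "n \<ge> 0" and "\<bar>m\<bar> \<le> n"
  shows "psi v1 ru rv n m b c =
    (\<i> * ((complex_of_real (v1 $ 1) + \<i> * complex_of_real (v1 $ 2)) / 2) * psi v1 ru rv (n - 1) (m - 1) b c
     + \<i> * ((complex_of_real (v1 $ 1) - \<i> * complex_of_real (v1 $ 2)) / 2) * psi v1 ru rv (n - 1) (m + 1) b c
     - complex_of_real (v1 $ 3) * psi v1 ru rv (n - 1) m b c
     + j_fun v1 ru rv n m b c) / of_int (n + int b + int c + 2)"
  by (rule main[OF assms(3)])

end
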